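(* The exponential vector space $X:=\mathscr D([0,\infty):\mathbb N)$ has no basis, i.e. $X\smallsetminus X_0$ has no basis.
   Context: An exponential vector space (evs) over a field $K$ is a partially ordered set $(X,\leq)$ with a binary operation $+$ on $X$ and a map $K\times X\to X$, $(\alpha,x)\mapsto \alpha x$, such that: (A1) $(X,+)$ is a commutative semigroup with identity $\theta$; (A2) $x\leq y$ implies $x+z\leq y+z$ and $\alpha x\leq \alpha y$ for all $z\in X$, $\alpha\in K$; (A3) $\alpha(x+y)=\alpha x+\alpha y$, $\alpha(\beta x)=(\alpha\beta)x$, $(\alpha+\beta)x\leq \alpha x+\beta x$, $1x=x$; (A4) $\alpha x=\theta$ iff $\alpha=0$ or $x=\theta$; (A5) $x+(-1)x=\theta$ iff $x\in X_0$, where $X_0:=\{z\in X: y\not\leq z \text{ for all } y\in X\smallsetminus\{z\}\}$ (the set of minimal elements); (A6) for each $x\in X$ there is $p\in X_0$ with $p\leq x$. $\mathscr D([0,\infty):\mathbb N)$ is the set of all sequences $(x_i)_{i\in\mathbb N}$ with $x_i\in[0,\infty)$, over the field $\mathbb C$, with componentwise addition, scalar multiplication $\alpha\cdot(x_i)_i=(|\alpha|x_i)_i$, and the dictionary order: $x\leq y$ iff $x=y$ or $x_i<y_i$ at the least index $i$ with $x_i\neq y_i$; its primitive space is $\{(0,0,\dots)\}$. For $x\in X\smallsetminus X_0$ let $L(x):=\{z\in X: z\geq \alpha x+p \text{ for some } \alpha\in K\smallsetminus\{0\},\ p\in X_0\}$. A subset $B\subseteq X\smallsetminus X_0$ generates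 $X\smallsetminus X_0$ if $X\smallsetminus X_0=\bigcup_{b\in B}L(b)$. Elements $x,y\in X\smallsetminus X_0$ are orderly dependent if $x\in L(y)$ or $y\in L(x)$, and orderly independent otherwise; $B$ is orderly independent if any two distinct members are orderly independent. A basis of $X\smallsetminus X_0$ is an orderly independent generating subset. *)

theory Defs
  imports Complex_Main
begin

definition prim_space :: "'a set \<Rightarrow> ('a \<Rightarrow> 'a \<Rightarrow> bool) \<Rightarrow> 'a set" where
  "prim_space X le = {z \<in> X. \<forall>y \<in> X - {z}. \<not> le y z}"

definition Lset :: "'a set \<Rightarrow> ('a \<Rightarrow> 'a \<Rightarrow> bool) \<Rightarrow> ('a \<Rightarrow> 'a \<Rightarrow> 'a)
    \<Rightarrow> ('k::field \<Rightarrow> 'a \<Rightarrow> 'a) \<Rightarrow> 'a \<Rightarrow> 'a set" where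
  "Lset X le add smult x =
     {z \<in> X. \<exists>\<alpha>. \<alpha> \<noteq> 0 \<and> (\<exists>p \<in> prim_space X le. le (add (smult \<alpha> x) p) z)}"

definition generates :: "'a set \<Rightarrow> ('a \<Rightarrow> 'a \<Rightarrow> bool) \<Rightarrow> ('a \<Rightarrow> 'a \<Rightarrow> 'a)
    \<Rightarrow> ('k::field \<Rightarrow> 'a \<Rightarrow> 'a) \<Rightarrow> 'a set \<Rightarrow> bool" where
  "generates X le add smult B \<longleftrightarrow>
     B \<subseteq> X - prim_space X le \<and>
     X - prim_space X le = (\<Union>b\<in>B. Lset X le add smult b)"

definition orderly_dependent :: "'a set \<Rightarrow> ('a \<Rightarrow> 'a \<Rightarrow> bool) \<Rightarrow> ('a \<Rightarrow> 'a \<Rightarrow> 'a)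
    \<Rightarrow> ('k::field \<Rightarrow> 'a \<Rightarrow> 'a) \<Rightarrow> 'a \<Rightarrow> 'a \<Rightarrow> bool" where
  "orderly_dependent X le add smult x y \<longleftrightarrow>
     x \<in> Lset X le add smult y \<or> y \<in> Lset X le add smult x"

definition orderly_independent_set :: "'a set \<Rightarrow> ('a \<Rightarrow> 'a \<Rightarrow> bool) \<Rightarrow> ('a \<Rightarrow> 'a \<Rightarrow> 'a)
    \<Rightarrow> ('k::field \<Rightarrow> 'a \<Rightarrow> 'a) \<Rightarrow> 'a set \<Rightarrow> bool" where
  "orderly_independent_set X le add smult B \<longleftrightarrow>
     B \<subseteq> X - prim_space X le \<and>
     (\<forall>x\<in>B. \<forall>y\<in>B. x \<noteq> y \<longrightarrow> \<not> orderly_dependent X le add smult x y)"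

definition is_basis :: "'a set \<Rightarrow> ('a \<Rightarrow> 'a \<Rightarrow> bool) \<Rightarrow> ('a \<Rightarrow> 'a \<Rightarrow> 'a)
    \<Rightarrow> ('k::field \<Rightarrow> 'a \<Rightarrow> 'a) \<Rightarrow> 'a set \<Rightarrow> bool" where
  "is_basis X le add smult B \<longleftrightarrow>
     orderly_independent_set X le add smult B \<and> generates X le add smult B"

definition D_carrier :: "(nat \<Rightarrow> real) set" where
  "D_carrier = {x. \<forall>i. 0 \<le> x i}"

definition D_le :: "(nat \<Rightarrow> real) \<Rightarrow> (nat \<Rightarrow> real) \<Rightarrow> bool" where
  "D_le x y \<longleftrightarrow> x = y \<or> (let i = (LEAST i. x i \<noteq> y i) in x i < y i)"

definition D_add :: "(nat \<Rightarrow> real) \<Rightarrow> (nat \<Rightarrow> real) \<Rightarrow> (nat \<Rightarrow> real)" where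
  "D_add x y = (\<lambda>i. x i + y i)"

definition D_smult :: "complex \<Rightarrow> (nat \<Rightarrow> real) \<Rightarrow> (nat \<Rightarrow> real)" where
  "D_smult \<alpha> x = (\<lambda>i. cmod \<alpha> * x i)"

end

theory Submission
  imports Defs
begin

lemma D_le_I:
  assumes "\<forall>i<n. u i = v i" "u n < v n" shows "D_le u v"
proof -
  have "(LEAST i. u i \<noteq> v i) = n"
    by (rule Least_equality) (use assms in \<open>auto simp: not_less[symmetric]\<close>)
  thus ?thesis using assms unfolding D_le_def Let_def by auto
qed

lemma D_le_notI:
  assumes "\<forall>i<n. u i = v i" "u n > v n" shows "\<not> D_le u v"
proof -
  have "(LEAST i. u i \<noteq> v i) = n"
    by (rule Least_equality) (use assms in \<open>auto simp: not_less[symmetric]\<close>)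
  moreover have "u \<noteq> v" using assms(2) by auto
  ultimately show ?thesis using assms unfolding D_le_def Let_def by auto
qed

definition nz :: "(nat \<Rightarrow> real) \<Rightarrow> nat" where "nz x = (LEAST i. x i \<noteq> 0)"

lemma nz_props:
  assumes "x \<noteq> (\<lambda>i. 0)"
  shows "x (nz x) \<noteq> 0" "\<And>i. i < nz x \<Longrightarrow> x i = 0"
proof -
  obtain j where "x j \<noteq> 0" using assms by auto
  thus "x (nz x) \<noteq> 0" unfolding nz_def by (rule LeastI)
  show "\<And>i. i < nz x \<Longrightarrow> x i = 0" unfolding nz_def using not_less_Least by blast
qed

lemma pos_nz:
  assumes "x \<in> D_carrier" "x \<noteq> (\<lambda>i. 0)" shows "x (nz x) > 0"
proof -
  have "x (nz x) \<noteq> 0" using nz_props(1)[OF assms(2)] .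
  moreover have "x (nz x) \<ge> 0" using assms(1) unfolding D_carrier_def by blast
  ultimately show ?thesis by linarith
qed

lemma zero_in: "(\<lambda>i. 0) \<in> D_carrier" unfolding D_carrier_def by simp

lemma prim: "prim_space D_carrier D_le = {\<lambda>i. 0}"
proof
  show "prim_space D_carrier D_le \<subseteq> {\<lambda>i. 0}"
  proof
    fix z assume z: "z \<in> prim_space D_carrier D_le"
    show "z \<in> {\<lambda>i. 0}"
    proof (rule ccontr)
      assume "z \<notin> {\<lambda>i. 0}"
      hence ne: "z \<noteq> (\<lambda>i. 0)" by blast
      have zX: "z \<in> D_carrier" using z unfolding prim_space_def by blast
      have "z (nz z) > 0" using pos_nz[OF zX ne] .
      hence "D_le (\<lambda>i. 0) z" using nz_props(2)[OF ne] by (intro D_le_I[of "nz z"]) auto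
      moreover have "(\<lambda>i. 0) \<in> D_carrier - {z}" using ne zero_in by blast
      ultimately show False using z unfolding prim_space_def by blast
    qed
  qed
  show "{\<lambda>i. 0} \<subseteq> prim_space D_carrier D_le"
  proof -
    have "\<not> D_le y (\<lambda>i. 0)" if "y \<in> D_carrier" "y \<noteq> (\<lambda>i. 0)" for y
    proof -
      have "y (nz y) > 0" using pos_nz[OF that] .
      thus ?thesis using nz_props(2)[OF that(2)] by (intro D_le_notI[of "nz y"]) auto
    qed
    hence "(\<lambda>i. 0) \<in> prim_space D_carrier D_le" unfolding prim_space_def using zero_in by blast
    thus ?thesis by blast
  qed
qed

lemma in_L:
  assumes x: "x \<in> D_carrier" "x \<noteq> (\<lambda>i. 0)" and y: "y \<in> D_carrier" "y \<noteq> (\<lambda>i. 0)"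
    and le: "nz x \<le> nz y"
  shows "x \<in> Lset D_carrier D_le D_add D_smult y"
proof -
  define n where "n = nz x"
  have xn: "x n > 0" using pos_nz[OF x] unfolding n_def .
  have yn: "y n \<ge> 0" using y(1) unfolding D_carrier_def by auto
  define c where "c = (if y n = 0 then 1 else x n / (2 * y n))"
  have c: "c > 0" using xn yn unfolding c_def by auto
  have cyn: "c * y n < x n" using xn yn unfolding c_def by (auto simp: field_simps)
  have "D_le (D_add (D_smult (complex_of_real c) y) (\<lambda>i. 0)) x"
  proof (rule D_le_I[of n])
    show "\<forall>i<n. D_add (D_smult (complex_of_real c) y) (\<lambda>i. 0) i = x i"
      using nz_props(2)[OF x(2)] nz_props(2)[OF y(2)] le unfolding n_def D_add_def D_smult_def
      by auto
    show "D_add (D_smult (complex_of_real c) y) (\<lambda>i. 0) n < x n"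
      using cyn c unfolding D_add_def D_smult_def by auto
  qed
  thus ?thesis unfolding Lset_def prim using x c by (intro CollectI conjI) (auto intro!: exI[of _ "complex_of_real c"])
qed

theorem mainTheorem14:
  shows "\<not> (\<exists>B. is_basis D_carrier D_le D_add D_smult B)"
proof
  assume "\<exists>B. is_basis D_carrier D_le D_add D_smult B"
  then obtain B where B: "is_basis D_carrier D_le D_add D_smult B" by blast
  have sub: "B \<subseteq> D_carrier - {\<lambda>i. 0}" and
    gen: "D_carrier - {\<lambda>i. 0} = (\<Union>b\<in>B. Lset D_carrier D_le D_add D_smult b)" and
    ind: "\<forall>x\<in>B. \<forall>y\<in>B. x \<noteq> y \<longrightarrow> \<not> orderly_dependent D_carrier D_le D_add D_smult x y"
  proof -
    have oi: "orderly_independent_set D_carrier D_le D_add D_smult B" and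
      g: "generates D_carrier D_le D_add D_smult B" using B unfolding is_basis_def by blast+
    show "B \<subseteq> D_carrier - {\<lambda>i. 0}" using oi[unfolded orderly_independent_set_def prim] by (rule conjunct1)
    show "D_carrier - {\<lambda>i. 0} = (\<Union>b\<in>B. Lset D_carrier D_le D_add D_smult b)"
      using g[unfolded generates_def prim] by (rule conjunct2)
    show "\<forall>x\<in>B. \<forall>y\<in>B. x \<noteq> y \<longrightarrow> \<not> orderly_dependent D_carrier D_le D_add D_smult x y"
      using oi[unfolded orderly_independent_set_def prim] by (rule conjunct2)
  qed
  define e0 :: "nat \<Rightarrow> real" where "e0 = (\<lambda>i. if i = 0 then 1 else 0)"
  have "e0 \<in> D_carrier - {\<lambda>i. 0}" unfolding e0_def D_carrier_def by (auto dest: fun_cong[of _ _ 0])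
  hence "e0 \<in> (\<Union>b\<in>B. Lset D_carrier D_le D_add D_smult b)" by (simp only: gen)
  then obtain b where b: "b \<in> B" by blast
  have bX: "b \<in> D_carrier" "b \<noteq> (\<lambda>i. 0)" using b sub by blast+
  define N where "N = nz b"
  define z :: "nat \<Rightarrow> real" where "z = (\<lambda>i. if i = Suc N then 1 else 0)"
  have zX: "z \<in> D_carrier" "z \<noteq> (\<lambda>i. 0)" unfolding z_def D_carrier_def by (auto dest: fun_cong[of _ _ "Suc N"])
  hence "z \<in> D_carrier - {\<lambda>i. 0}" by blast
  hence "z \<in> (\<Union>b\<in>B. Lset D_carrier D_le D_add D_smult b)" by (simp only: gen)
  then obtain b' where b': "b' \<in> B" "z \<in> Lset D_carrier D_le D_add D_smult b'" by blast
  have b'X: "b' \<in> D_carrier" "b' \<noteq> (\<lambda>i. 0)" using b'(1) sub by blast+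
  have "b' = b"
  proof (rule ccontr)
    assume "b' \<noteq> b"
    hence "\<not> orderly_dependent D_carrier D_le D_add D_smult b b'" using ind b b' by auto
    moreover have "orderly_dependent D_carrier D_le D_add D_smult b b'"
      unfolding orderly_dependent_def
    proof (cases "nz b \<le> nz b'")
      case True thus "b \<in> Lset D_carrier D_le D_add D_smult b' \<or> b' \<in> Lset D_carrier D_le D_add D_smult b"
        using in_L[OF bX b'X] by auto
    next
      case False thus "b \<in> Lset D_carrier D_le D_add D_smult b' \<or> b' \<in> Lset D_carrier D_le D_add D_smult b"
        using in_L[OF b'X bX] by auto
    qed
    ultimately show False by blast
  qed
  hence "z \<in> Lset D_carrier D_le D_add D_smult b" using b' by simp
  hence "\<exists>\<alpha>::complex. \<alpha> \<noteq> 0 \<and> D_le (D_add (D_smult \<alpha> b) (\<lambda>i. 0)) z"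
    unfolding Lset_def prim by simp
  then obtain \<alpha> :: complex where a: "\<alpha> \<noteq> 0" "D_le (D_add (D_smult \<alpha> b) (\<lambda>i. 0)) z"
    by blast
  have "b N \<noteq> 0" using nz_props(1)[OF bX(2)] unfolding N_def .
  moreover have "b N \<ge> 0" using bX(1) unfolding D_carrier_def by auto
  ultimately have bN: "b N > 0" by linarith
  have "\<not> D_le (D_add (D_smult \<alpha> b) (\<lambda>i. 0)) z"
  proof (rule D_le_notI[of N])
    show "\<forall>i<N. D_add (D_smult \<alpha> b) (\<lambda>i. 0) i = z i"
      using nz_props(2)[OF bX(2)] unfolding N_def D_add_def D_smult_def z_def by auto
    show "D_add (D_smult \<alpha> b) (\<lambda>i. 0) N > z N"
      using bN a(1) unfolding D_add_def D_smult_def z_def by auto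
  qed
  thus False using a(2) by blast
qed

end
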